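(* Let $k\ge 4$, $n=2k-1$, $\lambda\in\overline{\mathcal{U}}_{T_n}$, and let $Y=\mathrm{KN}(S_\lambda)$ with hook lengths $h_{i,j}$. Write the elements of $S_\lambda$ increasingly as $0=s_0<s_1<\cdots$ and let $z$ be the index with $s_z=n-2$. Then for every $1\le i\le z$, $$h_{i,i}=2\,h_{i,z+1}.$$
   Context: A partition of $N$ into distinct parts is a sequence $\lambda=(\lambda_1<\dots<\lambda_t)$ of positive integers with sum $N$ and $t\ge 2$, identified with its set of parts. Missing parts: $\mathcal{M}_\lambda=\{1,\dots,\lambda_t\}\setminus\lambda$. $\lambda$ is refinable if two distinct missing parts sum to a part of $\lambda$, unrefinable otherwise; $\mathcal{U}_N$ is the set of unrefinable partitions of $N$. An element of $\mathcal{U}_N$ is maximal if its largest part is the maximum of the largest parts of elements of $\mathcal{U}_N$; $\widetilde{\mathcal{U}}_N$ is the set of these and $\overline{\mathcal{U}}_N=\{\lambda\in\widetilde{\mathcal{U}}_N:\#\mathcal{M}_\lambda=\lfloor\lambda_t/2\rfloor\}$. $T_n=n(n+1)/2$. For $\lambda\in\overline{\mathcal{U}}_{T_n}$ (with $n=2k-1$, $k\ge 4$) one knows $\lambda_t=2n-4$, $t=n-2$ and $n-2\notin\lambda$. $S_\lambda=\mathbb{N}_0\setminus\lambda$. The Keith–Nath transformation sends a set $S\subseteq\mathbb{N}_0$ with $0\in S$ and finite complement to the Young diagram $\mathrm{KN}(S)$ whose boundary is the lattice path that, starting at the origin, takes for $j=0,1,\dots,\max(\mathbb{N}_0\setminus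 S)$ an east step if $j\in S$ and a north step otherwise. Diagrams are in English convention; $h_{i,j}$ is the hook length of the cell in row $i$ (from the top) and column $j$ (from the left): (cells to its right in its row) + (cells below it in its column) + 1. *)

theory Defs
  imports Main
begin

definition distinct_partition :: "nat \<Rightarrow> nat set \<Rightarrow> bool" where
  "distinct_partition N lam \<longleftrightarrow> finite lam \<and> 0 \<notin> lam \<and> card lam \<ge> 2 \<and> \<Sum>lam = N"

definition missing :: "nat set \<Rightarrow> nat set" where
  "missing lam = {1..Max lam} - lam"

definition refinable :: "nat set \<Rightarrow> bool" where
  "refinable lam \<longleftrightarrow> (\<exists>a b. a \<in> missing lam \<and> b \<in> missing lam \<and> a \<noteq> b \<and> a + b \<in> lam)"

definition unref :: "nat \<Rightarrow> nat set set" where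
  "unref N = {lam. distinct_partition N lam \<and> \<not> refinable lam}"

definition unref_max :: "nat \<Rightarrow> nat set set" where
  "unref_max N = {lam \<in> unref N. Max lam = Max (Max ` unref N)}"

definition unref_bar :: "nat \<Rightarrow> nat set set" where
  "unref_bar N = {lam \<in> unref_max N. card (missing lam) = Max lam div 2}"

definition tri :: "nat \<Rightarrow> nat" where
  "tri n = n * (n + 1) div 2"

definition S_of :: "nat set \<Rightarrow> nat set" where
  "S_of lam = UNIV - lam"

text \<open>For S with 0 in S and finite complement G,
  the lattice path takes, for j = 0..Max G, an east step if j is in S and a north
  step otherwise. The north step at gap g is preceded by #{s in S. s < g} east
  steps, so the row of the diagram determined by that north step has this length.
  In English convention the top row (row 1) comes from the last north step, i.e. the
  largest gap; row i comes from the i-th largest gap. Cells are (row, column),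
  both 1-indexed.\<close>
definition kth_largest :: "nat set \<Rightarrow> nat \<Rightarrow> nat" where
  "kth_largest G i = rev (sorted_list_of_set G) ! (i - 1)"

definition KN :: "nat set \<Rightarrow> (nat \<times> nat) set" where
  "KN S = {(i, j). 1 \<le> i \<and> i \<le> card (UNIV - S) \<and> 1 \<le> j \<and>
                   j \<le> card {s \<in> S. s < kth_largest (UNIV - S) i}}"

definition hook :: "(nat \<times> nat) set \<Rightarrow> nat \<Rightarrow> nat \<Rightarrow> nat" where
  "hook Y i j = card {j'. j < j' \<and> (i, j') \<in> Y} + card {i'. i < i' \<and> (i', j) \<in> Y} + 1"

end

theory Submission
  imports Defs
begin


definition cnt :: "(nat \<Rightarrow> bool) \<Rightarrow> nat \<Rightarrow> nat \<Rightarrow> nat" where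
  "cnt P a b = card {c. a \<le> c \<and> c < b \<and> P c}"

lemma cnt_split: "a \<le> b \<Longrightarrow> b \<le> c \<Longrightarrow> cnt P a c = cnt P a b + cnt P b c"
proof -
  assume "a \<le> b" "b \<le> c"
  have "{x. a \<le> x \<and> x < c \<and> P x} = {x. a \<le> x \<and> x < b \<and> P x} \<union> {x. b \<le> x \<and> x < c \<and> P x}"
    using \<open>a \<le> b\<close> \<open>b \<le> c\<close> by auto
  moreover have "finite {x. a \<le> x \<and> x < b \<and> P x}" "finite {x. b \<le> x \<and> x < c \<and> P x}" by auto
  moreover have "{x. a \<le> x \<and> x < b \<and> P x} \<inter> {x. b \<le> x \<and> x < c \<and> P x} = {}" by auto
  ultimately show ?thesis unfolding cnt_def by (simp add: card_Un_disjoint)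
qed

lemma cnt_compl: "cnt P a b + cnt (\<lambda>x. \<not> P x) a b = b - a"
proof -
  have "{x. a \<le> x \<and> x < b} = {x. a \<le> x \<and> x < b \<and> P x} \<union> {x. a \<le> x \<and> x < b \<and> \<not> P x}" by auto
  moreover have "finite {x. a \<le> x \<and> x < b \<and> P x}" "finite {x. a \<le> x \<and> x < b \<and> \<not> P x}" by auto
  moreover have "{x. a \<le> x \<and> x < b \<and> P x} \<inter> {x. a \<le> x \<and> x < b \<and> \<not> P x} = {}" by auto
  moreover have "{x. a \<le> x \<and> x < b} = {a..<b}" by auto
  ultimately have "b - a = card {x. a \<le> x \<and> x < b \<and> P x} + card {x. a \<le> x \<and> x < b \<and> \<not> P x}"
    by (metis card_Un_disjoint card_atLeastLessThan)
  then show ?thesis unfolding cnt_def by simp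
qed

lemma cnt_single: "cnt P a (Suc a) = (if P a then 1 else 0)"
proof -
  have "{x. a \<le> x \<and> x < Suc a \<and> P x} = (if P a then {a} else {})" by (auto simp: less_Suc_eq_le dest: le_antisym)
  then show ?thesis unfolding cnt_def by simp
qed

lemma cnt_cong: "(\<And>x. a \<le> x \<Longrightarrow> x < b \<Longrightarrow> P x = Q x) \<Longrightarrow> cnt P a b = cnt Q a b"
  unfolding cnt_def by (metis (mono_tags, lifting) Collect_cong)

lemma cnt_false: "(\<And>x. a \<le> x \<Longrightarrow> x < b \<Longrightarrow> \<not> P x) \<Longrightarrow> cnt P a b = 0"
  unfolding cnt_def by auto

lemma cnt_refl: "b \<le> s + 1 \<Longrightarrow> a \<le> b \<Longrightarrow>
   cnt P a b = cnt (\<lambda>c. P (s - c)) (s + 1 - b) (s + 1 - a)"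
proof -
  assume h: "b \<le> s + 1" "a \<le> b"
  have "{c. a \<le> c \<and> c < b \<and> P c} = (\<lambda>c. s - c) ` {c. s + 1 - b \<le> c \<and> c < s + 1 - a \<and> P (s - c)}"
  proof (rule set_eqI, rule iffI)
    fix x assume "x \<in> {c. a \<le> c \<and> c < b \<and> P c}"
    then show "x \<in> (\<lambda>c. s - c) ` {c. s + 1 - b \<le> c \<and> c < s + 1 - a \<and> P (s - c)}"
      using h by (intro image_eqI[of _ _ "s - x"]) auto
  next
    fix x assume "x \<in> (\<lambda>c. s - c) ` {c. s + 1 - b \<le> c \<and> c < s + 1 - a \<and> P (s - c)}"
    then show "x \<in> {c. a \<le> c \<and> c < b \<and> P c}" using h by auto
  qed
  moreover have "inj_on (\<lambda>c. s - c) {c. s + 1 - b \<le> c \<and> c < s + 1 - a \<and> P (s - c)}"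
    using h by (auto simp: inj_on_def)
  ultimately show ?thesis unfolding cnt_def by (simp add: card_image)
qed

lemma cnt_le: "cnt P a b \<le> b - a"
  using cnt_compl[of P a b] by linarith

lemma nth_below:
  fixes xs :: "nat list"
  assumes "sorted_wrt (<) xs" "p < length xs"
  shows "card {y \<in> set xs. y < xs ! p} = p"
proof -
  have "{y \<in> set xs. y < xs ! p} = set (take p xs)"
  proof (rule set_eqI, rule iffI)
    fix y assume "y \<in> {y \<in> set xs. y < xs ! p}"
    then obtain q where q: "q < length xs" "y = xs ! q" "y < xs ! p" by (auto simp: in_set_conv_nth)
    have "q < p"
    proof (rule ccontr)
      assume "\<not> q < p"
      then have "p \<le> q" by simp
      then have "xs ! p \<le> xs ! q" using assms q
        by (metis le_neq_implies_less order.refl order_less_imp_le sorted_wrt_nth_less)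
      then show False using q by simp
    qed
    then show "y \<in> set (take p xs)" using q by (auto simp: in_set_conv_nth intro!: exI[of _ q])
  next
    fix y assume "y \<in> set (take p xs)"
    then obtain q where q: "q < p" "y = xs ! q" using assms(2) by (auto simp: in_set_conv_nth)
    then show "y \<in> {y \<in> set xs. y < xs ! p}" using assms
      by (auto simp: sorted_wrt_nth_less)
  qed
  moreover have "distinct (take p xs)" using assms(1) strict_sorted_iff distinct_take by blast
  ultimately show ?thesis using assms(2) by (simp add: distinct_card)
qed

lemma kth_props:
  fixes A :: "nat set"
  assumes "finite A" "1 \<le> i" "i \<le> card A"
  shows "kth_largest A i \<in> A \<and> card {y \<in> A. y < kth_largest A i} = card A - i"
proof -
  let ?xs = "sorted_list_of_set A"
  have len: "length ?xs = card A" by simp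
  have k: "kth_largest A i = ?xs ! (card A - i)"
    unfolding kth_largest_def using assms by (simp add: rev_nth Suc_diff_le)
  have lt: "card A - i < length ?xs" using assms len by linarith
  have "?xs ! (card A - i) \<in> set ?xs" using lt by simp
  then have "?xs ! (card A - i) \<in> A" using assms(1) by simp
  moreover have "card {y \<in> set ?xs. y < ?xs ! (card A - i)} = card A - i"
    using nth_below[OF _ lt] strict_sorted_list_of_set by blast
  ultimately show ?thesis using k assms(1) by simp
qed

lemma kth_strict:
  fixes A :: "nat set"
  assumes "finite A" "1 \<le> i1" "i1 < i2" "i2 \<le> card A"
  shows "kth_largest A i2 < kth_largest A i1"
proof (rule ccontr)
  let ?g = "kth_largest A"
  assume "\<not> ?g i2 < ?g i1"
  then have le: "?g i1 \<le> ?g i2" by simp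
  have p1: "?g i1 \<in> A" "card {y \<in> A. y < ?g i1} = card A - i1" using kth_props[OF assms(1), of i1] assms by auto
  have p2: "?g i2 \<in> A" "card {y \<in> A. y < ?g i2} = card A - i2" using kth_props[OF assms(1), of i2] assms by auto
  show False
  proof (cases "?g i1 = ?g i2")
    case True
    then show ?thesis using p1 p2 assms by simp
  next
    case False
    then have lt: "?g i1 < ?g i2" using le by simp
    have "{y \<in> A. y < ?g i1} \<subset> {y \<in> A. y < ?g i2}" using lt p1 by auto
    then have "card {y \<in> A. y < ?g i1} < card {y \<in> A. y < ?g i2}"
      using assms(1) by (intro psubset_card_mono) auto
    then show ?thesis using p1 p2 assms by simp
  qed
qed

lemma kth_count:
  fixes A :: "nat set"
  assumes "finite A" "1 \<le> i" "i \<le> card A"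
  shows "card {i'. i < i' \<and> i' \<le> card A \<and> P (kth_largest A i')} = card {x \<in> A. x < kth_largest A i \<and> P x}"
proof -
  let ?g = "kth_largest A"
  let ?t = "card A"
  have strict: "\<And>a b. 1 \<le> a \<Longrightarrow> a < b \<Longrightarrow> b \<le> ?t \<Longrightarrow> ?g b < ?g a"
    using kth_strict[OF assms(1)] by blast
  have inj: "inj_on ?g {1..?t}"
  proof (rule inj_onI)
    fix a b assume "a \<in> {1..?t}" "b \<in> {1..?t}" "?g a = ?g b"
    then show "a = b" using strict[of a b] strict[of b a] by (metis atLeastAtMost_iff less_irrefl nat_neq_iff)
  qed
  have sub: "?g ` {1..?t} \<subseteq> A" using kth_props[OF assms(1)] by auto
  have imgeq: "?g ` {1..?t} = A"
    using card_image[OF inj] sub assms(1) by (intro card_seteq) auto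
  have "{x \<in> A. x < ?g i \<and> P x} = ?g ` {i'. i < i' \<and> i' \<le> ?t \<and> P (?g i')}"
  proof (rule set_eqI, rule iffI)
    fix x assume x: "x \<in> {x \<in> A. x < ?g i \<and> P x}"
    then obtain i' where i': "i' \<in> {1..?t}" "x = ?g i'" using imgeq by blast
    have "i < i'"
    proof (rule ccontr)
      assume "\<not> i < i'"
      then have "i' \<le> i" by simp
      then have "?g i \<le> ?g i'" using strict[of i' i] i' assms by (cases "i' = i") auto
      then show False using x i' by simp
    qed
    then show "x \<in> ?g ` {i'. i < i' \<and> i' \<le> ?t \<and> P (?g i')}" using i' x by auto
  next
    fix x assume "x \<in> ?g ` {i'. i < i' \<and> i' \<le> ?t \<and> P (?g i')}"
    then obtain i' where i': "i < i'" "i' \<le> ?t" "P (?g i')" "x = ?g i'" by blast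
    then show "x \<in> {x \<in> A. x < ?g i \<and> P x}"
      using strict[of i i'] assms kth_props[OF assms(1), of i'] by auto
  qed
  moreover have "inj_on ?g {i'. i < i' \<and> i' \<le> ?t \<and> P (?g i')}"
    using assms by (intro inj_on_subset[OF inj]) auto
  ultimately show ?thesis by (simp add: card_image)
qed

lemma KN_eq:
  "KN (S_of lam) = {(i, j). 1 \<le> i \<and> i \<le> card lam \<and> 1 \<le> j \<and> j \<le> cnt (\<lambda>c. c \<notin> lam) 0 (kth_largest lam i)}"
proof -
  have U: "UNIV - S_of lam = lam" unfolding S_of_def by auto
  have "\<And>g. {s \<in> S_of lam. s < g} = {c. 0 \<le> c \<and> c < g \<and> c \<notin> lam}"
    unfolding S_of_def by auto
  then show ?thesis unfolding KN_def U cnt_def by simp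
qed

lemma KN_hook:
  assumes "finite lam" "1 \<le> i" "i \<le> card lam" "1 \<le> j"
  shows "hook (KN (S_of lam)) i j = (cnt (\<lambda>c. c \<notin> lam) 0 (kth_largest lam i) - j)
     + card {x \<in> lam. x < kth_largest lam i \<and> j \<le> cnt (\<lambda>c. c \<notin> lam) 0 x} + 1"
proof -
  let ?r = "\<lambda>x. cnt (\<lambda>c. c \<notin> lam) 0 x"
  have "{j'. j < j' \<and> (i, j') \<in> KN (S_of lam)} = {j<..?r (kth_largest lam i)}"
    unfolding KN_eq using assms by auto
  then have arm: "card {j'. j < j' \<and> (i, j') \<in> KN (S_of lam)} = ?r (kth_largest lam i) - j" by simp
  have "{i'. i < i' \<and> (i', j) \<in> KN (S_of lam)} = {i'. i < i' \<and> i' \<le> card lam \<and> j \<le> ?r (kth_largest lam i')}"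
    unfolding KN_eq using assms by auto
  then have leg: "card {i'. i < i' \<and> (i', j) \<in> KN (S_of lam)} = card {x \<in> lam. x < kth_largest lam i \<and> j \<le> ?r x}"
    using kth_count[OF assms(1-3), of "\<lambda>x. j \<le> ?r x"] by simp
  show ?thesis unfolding hook_def arm leg by simp
qed

lemma hook_main:
  fixes lam :: "nat set" and m z i :: nat
  assumes fin: "finite lam" and top: "2*m \<in> lam" and le: "\<forall>x\<in>lam. x \<le> 2*m"
    and mid: "m \<notin> lam" and zero: "0 \<notin> lam"
    and pair: "\<forall>c. 1 \<le> c \<longrightarrow> c < m \<longrightarrow> (c \<in> lam \<longleftrightarrow> 2*m - c \<notin> lam)"
    and card: "card lam = m" and zdef: "z = cnt (\<lambda>c. c \<notin> lam) 0 m" and i1: "1 \<le> i" and iz: "i \<le> z"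
  shows "(i,i) \<in> KN (S_of lam) \<and> (i, z+1) \<in> KN (S_of lam) \<and>
     hook (KN (S_of lam)) i i = 2 * hook (KN (S_of lam)) i (z+1)"
proof -
  let ?Q = "\<lambda>c::nat. c \<notin> lam"
  let ?P = "\<lambda>c::nat. c \<in> lam"
  define g where "g = kth_largest lam i"
  have compl: "\<And>a b. cnt ?P a b + cnt ?Q a b = b - a" using cnt_compl[of ?P] by simp
  have zm: "z \<le> m" using cnt_le[of ?Q 0 m] zdef by simp
  have im: "i \<le> card lam" using card iz zm by simp
  have gin: "g \<in> lam" and gb: "card {y\<in>lam. y<g} = m - i"
    using kth_props[OF fin i1 im] card unfolding g_def by auto
  have "{c. 0 \<le> c \<and> c < g \<and> c \<in> lam} = {y\<in>lam. y<g}" by auto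
  then have below: "cnt ?P 0 g = m - i" unfolding cnt_def using gb by simp
  have Pm: "cnt ?P 0 m = m - z" using compl[of 0 m] zdef by simp
  have gm: "m < g"
  proof (rule ccontr)
    assume "\<not> m < g"
    then have "g < m" using mid gin by (cases "g = m") auto
    then have "cnt ?P 0 m = cnt ?P 0 g + cnt ?P g (Suc g) + cnt ?P (Suc g) m"
      using cnt_split[of 0 g m ?P] cnt_split[of g "Suc g" m ?P] by simp
    moreover have "cnt ?P g (Suc g) = 1" using cnt_single[of ?P g] gin by simp
    ultimately show False using Pm below i1 iz zm by linarith
  qed
  have g2m: "g \<le> 2*m" using le gin by auto
  define d where "d = 2*m - g"
  have dm: "d < m" using gm g2m d_def by simp
  have gd: "g = 2*m - d" using d_def g2m by simp
  have rbig: "\<And>x. m < x \<Longrightarrow> z+1 \<le> cnt ?Q 0 x"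
  proof -
    fix x :: nat assume "m < x"
    then have "cnt ?Q 0 x = cnt ?Q 0 m + cnt ?Q m (Suc m) + cnt ?Q (Suc m) x"
      using cnt_split[of 0 m x ?Q] cnt_split[of m "Suc m" x ?Q] by simp
    moreover have "cnt ?Q m (Suc m) = 1" using cnt_single[of ?Q m] mid by simp
    ultimately show "z+1 \<le> cnt ?Q 0 x" using zdef by simp
  qed
  have rsmall: "cnt ?Q 0 x \<le> z" if "x \<le> m" for x
    using cnt_split[of 0 x m ?Q] that zdef by simp
  have cm: "m < c" if "m \<le> c" "c \<in> lam" for c
    using mid that le_neq_implies_less by blast
  have rg: "cnt ?Q 0 g = g - (m - i)" using compl[of 0 g] below by simp
  have "cnt ?P (Suc m) g = cnt (\<lambda>c. ?P (2*m - c)) (2*m + 1 - g) (2*m + 1 - Suc m)"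
    using cnt_refl[of g "2*m" "Suc m" ?P] g2m gm by simp
  also have "\<dots> = cnt (\<lambda>c. ?P (2*m - c)) (Suc d) m" using d_def g2m gm
    by (simp add: Suc_diff_le)
  also have "\<dots> = cnt ?Q (Suc d) m"
    using pair by (intro cnt_cong) auto
  finally have upper: "cnt ?P (Suc m) g = cnt ?Q (Suc d) m" .
  have "cnt ?P 0 g = cnt ?P 0 m + cnt ?P m (Suc m) + cnt ?P (Suc m) g"
    using cnt_split[of 0 m g ?P] cnt_split[of m "Suc m" g ?P] gm by simp
  moreover have Pmm: "cnt ?P m (Suc m) = 0" using cnt_single[of ?P m] mid by simp
  ultimately have QdM: "cnt ?Q (Suc d) m = z - i" using below Pm upper i1 iz zm by linarith
  have Q01: "cnt ?Q 0 1 = 1" using cnt_single[of ?Q 0] zero by simp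
  have "cnt ?Q 0 m = cnt ?Q 0 1 + cnt ?Q 1 (Suc d) + cnt ?Q (Suc d) m"
    using cnt_split[of 0 1 m ?Q] cnt_split[of 1 "Suc d" m ?Q] dm by simp
  then have Q1d: "cnt ?Q 1 (Suc d) = i - 1" using Q01 QdM zdef i1 iz by linarith
  have dnot: "1 \<le> d \<Longrightarrow> d \<notin> lam" using pair dm gin gd by auto
  have thr: "\<And>x. x \<in> lam \<Longrightarrow> x < m \<Longrightarrow> (i \<le> cnt ?Q 0 x \<longleftrightarrow> d < x)"
  proof -
    fix x assume x: "x \<in> lam" "x < m"
    have x1: "1 \<le> x" using x zero by (cases x) auto
    have r1: "cnt ?Q 0 x = 1 + cnt ?Q 1 x" using cnt_split[of 0 1 x ?Q] Q01 x1 by simp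
    show "i \<le> cnt ?Q 0 x \<longleftrightarrow> d < x"
    proof (cases "d < x")
      case True
      then have "cnt ?Q 1 x = cnt ?Q 1 (Suc d) + cnt ?Q (Suc d) x" using cnt_split[of 1 "Suc d" x ?Q] by simp
      then show ?thesis using True r1 Q1d by simp
    next
      case False
      then have "x < d" using x dnot x1 by (cases "x = d") auto
      then have "cnt ?Q 1 (Suc d) = cnt ?Q 1 x + cnt ?Q x d + cnt ?Q d (Suc d)"
        using cnt_split[of 1 x "Suc d" ?Q] cnt_split[of x d "Suc d" ?Q] x1 by simp
      moreover have "cnt ?Q d (Suc d) = 1" using cnt_single[of ?Q d] dnot \<open>x < d\<close> x1 by simp
      ultimately show ?thesis using False r1 Q1d by simp
    qed
  qed
  let ?R = "\<lambda>c. c \<in> lam \<and> i \<le> cnt ?Q 0 c"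
  have "card {x \<in> lam. x < g \<and> i \<le> cnt ?Q 0 x} = cnt ?R 0 g"
    unfolding cnt_def by (rule arg_cong[where f=card]) auto
  also have "\<dots> = cnt ?R 0 (Suc d) + cnt ?R (Suc d) m + cnt ?R m g"
    using cnt_split[of 0 "Suc d" g ?R] cnt_split[of "Suc d" m g ?R] dm gm by simp
  also have "cnt ?R 0 (Suc d) = 0"
  proof (rule cnt_false)
    fix x assume "0 \<le> x" "x < Suc d"
    then show "\<not> ?R x" using thr[of x] dm by auto
  qed
  also have "cnt ?R (Suc d) m = cnt ?P (Suc d) m"
  proof (rule cnt_cong)
    fix x assume "Suc d \<le> x" "x < m"
    then show "?R x = ?P x" using thr[of x] by auto
  qed
  also have "cnt ?R m g = cnt ?P m g"
  proof (rule cnt_cong)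
    fix x assume "m \<le> x" "x < g"
    show "?R x = ?P x"
    proof
      assume "?P x"
      then have "z + 1 \<le> cnt ?Q 0 x" using rbig cm \<open>m \<le> x\<close> by blast
      then show "?R x" using \<open>?P x\<close> iz by simp
    qed simp
  qed
  finally have legi0: "card {x \<in> lam. x < g \<and> i \<le> cnt ?Q 0 x} = cnt ?P (Suc d) m + cnt ?P m g" by simp
  have PmG: "cnt ?P m g = z - i"
    using cnt_split[of m "Suc m" g ?P] gm Pmm upper QdM by simp
  have "cnt ?P (Suc d) m + cnt ?Q (Suc d) m = m - Suc d" using compl by simp
  then have legi: "card {x \<in> lam. x < g \<and> i \<le> cnt ?Q 0 x} = m - Suc d"
    using legi0 PmG QdM by simp
  let ?R' = "\<lambda>c. c \<in> lam \<and> z + 1 \<le> cnt ?Q 0 c"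
  have "card {x \<in> lam. x < g \<and> z + 1 \<le> cnt ?Q 0 x} = cnt ?R' 0 g"
    unfolding cnt_def by (rule arg_cong[where f=card]) auto
  also have "\<dots> = cnt ?R' 0 m + cnt ?R' m g"
    using cnt_split[of 0 m g ?R'] gm by simp
  also have "cnt ?R' 0 m = 0"
  proof (rule cnt_false)
    fix x assume "0 \<le> x" "x < m"
    then show "\<not> ?R' x" using rsmall[of x] by simp
  qed
  also have "cnt ?R' m g = cnt ?P m g"
  proof (rule cnt_cong)
    fix x assume "m \<le> x" "x < g"
    show "?R' x = ?P x"
    proof
      assume "?P x"
      then show "?R' x" using rbig cm \<open>m \<le> x\<close> by blast
    qed simp
  qed
  finally have legz: "card {x \<in> lam. x < g \<and> z + 1 \<le> cnt ?Q 0 x} = z - i" using PmG by simp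
  have rgz: "z + 1 \<le> cnt ?Q 0 g" using rbig gm by simp
  have h1: "hook (KN (S_of lam)) i i = (cnt ?Q 0 g - i) + (m - Suc d) + 1"
    using KN_hook[OF fin i1 im i1] legi unfolding g_def by simp
  have h2: "hook (KN (S_of lam)) i (z+1) = (cnt ?Q 0 g - (z+1)) + (z - i) + 1"
    using KN_hook[OF fin i1 im, of "z+1"] legz unfolding g_def by simp
  have m1: "(i,i) \<in> KN (S_of lam)" unfolding KN_eq using i1 im rgz iz unfolding g_def by simp
  have m2: "(i,z+1) \<in> KN (S_of lam)" unfolding KN_eq using i1 im rgz unfolding g_def by simp
  have q: "cnt ?Q 0 g = m - d + i" using rg gd dm iz zm by linarith
  have "hook (KN (S_of lam)) i i = 2 * hook (KN (S_of lam)) i (z+1)"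
    using h1 h2 q dm iz zm rgz by linarith
  then show ?thesis using m1 m2 by simp
qed



lemma pair_struct:
  fixes lam :: "nat set"
  assumes fin: "finite lam" and ne: "lam \<noteq> {}" and z0: "0 \<notin> lam" and nr: "\<not> refinable lam"
    and cm: "card (missing lam) = Max lam div 2"
  shows "\<forall>c. 1 \<le> c \<longrightarrow> 2*c < Max lam \<longrightarrow> (c \<in> lam \<longleftrightarrow> Max lam - c \<notin> lam)"
    and "even (Max lam) \<longrightarrow> Max lam div 2 \<notin> lam"
proof -
  define L where "L = Max lam"
  have Lin: "L \<in> lam" using fin ne L_def by simp
  have le: "\<And>x. x \<in> lam \<Longrightarrow> x \<le> L" using fin L_def by simp
  have mis: "missing lam = {1..L} - lam" unfolding missing_def L_def by simp
  have nref: "\<And>a b. a \<in> missing lam \<Longrightarrow> b \<in> missing lam \<Longrightarrow> a \<noteq> b \<Longrightarrow> a + b \<in> lam \<Longrightarrow> False"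
    using nr unfolding refinable_def by blast
  define f where "f = (\<lambda>x::nat. min x (L - x))"
  have inj: "inj_on f (missing lam)"
  proof (rule inj_onI)
    fix x y assume xy: "x \<in> missing lam" "y \<in> missing lam" "f x = f y"
    have "x \<le> L" "y \<le> L" using xy mis by auto
    show "x = y"
    proof (rule ccontr)
      assume "x \<noteq> y"
      then have "x + y = L" using xy \<open>x \<le> L\<close> \<open>y \<le> L\<close> unfolding f_def by (auto simp: min_def split: if_splits)
      then show False using nref[OF xy(1,2) \<open>x \<noteq> y\<close>] Lin by simp
    qed
  qed
  have sub: "f ` missing lam \<subseteq> {1..L div 2}"
  proof
    fix y assume "y \<in> f ` missing lam"
    then obtain x where x: "x \<in> missing lam" "y = f x" by blast
    then have "1 \<le> x" "x \<le> L" "x \<noteq> L" using mis Lin by auto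
    then show "y \<in> {1..L div 2}" using x unfolding f_def by (auto simp: min_def)
  qed
  have fin2: "finite {1..L div 2}" by simp
  have eq: "f ` missing lam = {1..L div 2}"
    using card_image[OF inj] cm L_def sub by (intro card_seteq[OF fin2 sub]) simp
  have one: "c \<notin> lam \<or> L - c \<notin> lam" if "1 \<le> c" "c \<le> L div 2" for c
  proof -
    have "c \<in> f ` missing lam" using eq that by simp
    then obtain x where x: "x \<in> missing lam" "c = f x" by blast
    then have "x \<le> L" "x \<notin> lam" using mis by auto
    then have "x = c \<or> x = L - c" using x unfolding f_def by (auto simp: min_def)
    then show ?thesis using \<open>x \<notin> lam\<close> by auto
  qed
  show "\<forall>c. 1 \<le> c \<longrightarrow> 2*c < Max lam \<longrightarrow> (c \<in> lam \<longleftrightarrow> Max lam - c \<notin> lam)"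
  proof (intro allI impI)
    fix c assume c: "1 \<le> c" "2*c < Max lam"
    then have "c \<le> L div 2" using L_def by simp
    then have o: "c \<notin> lam \<or> L - c \<notin> lam" using one c by simp
    have "\<not> (c \<notin> lam \<and> L - c \<notin> lam)"
    proof
      assume "c \<notin> lam \<and> L - c \<notin> lam"
      then have "c \<in> missing lam" "L - c \<in> missing lam" using c mis L_def by auto
      moreover have "c \<noteq> L - c" "c + (L - c) = L" using c L_def by auto
      ultimately show False using nref Lin by metis
    qed
    then show "c \<in> lam \<longleftrightarrow> Max lam - c \<notin> lam" using o L_def by auto
  qed
  show "even (Max lam) \<longrightarrow> Max lam div 2 \<notin> lam"
  proof
    assume "even (Max lam)"
    then have "L - L div 2 = L div 2" using L_def by auto
    moreover have "1 \<le> L div 2 \<or> L div 2 = 0" by auto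
    ultimately show "Max lam div 2 \<notin> lam" using one[of "L div 2"] z0 L_def by auto
  qed
qed



lemma sum_bound:
  fixes lam :: "nat set" and n :: nat
  assumes fin: "finite lam" and ne: "lam \<noteq> {}" and z0: "0 \<notin> lam"
    and pr: "\<forall>c. 1 \<le> c \<longrightarrow> 2*c < Max lam \<longrightarrow> (c \<in> lam \<longleftrightarrow> Max lam - c \<notin> lam)"
    and ev: "even (Max lam) \<longrightarrow> Max lam div 2 \<notin> lam"
    and sm: "\<Sum>lam = tri n" and n2: "2 \<le> n"
  shows "Max lam \<le> 2*(n-2)"
proof (rule ccontr)
  assume big: "\<not> Max lam \<le> 2*(n-2)"
  define L where "L = Max lam"
  have Lin: "L \<in> lam" using fin ne L_def by simp
  have le: "\<And>x. x \<in> lam \<Longrightarrow> x \<le> L" using fin L_def by simp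
  define K where "K = (L - 1) div 2"
  define h where "h = (\<lambda>c. if c \<in> lam then c else L - c)"
  have cK: "2*c < L" if "c \<in> {1..K}" for c using that K_def by auto
  have img: "h ` {1..K} = lam - {L}"
  proof (rule set_eqI, rule iffI)
    fix x assume "x \<in> h ` {1..K}"
    then obtain c where c: "c \<in> {1..K}" "x = h c" by blast
    have "2*c < L" using cK c by simp
    then show "x \<in> lam - {L}" using pr c L_def unfolding h_def by (auto split: if_splits)
  next
    fix x assume x: "x \<in> lam - {L}"
    have x1: "1 \<le> x" using x z0 by (cases x) auto
    have xL: "x < L" using x le by force
    consider "2*x < L" | "2*x = L" | "L < 2*x" by linarith
    then show "x \<in> h ` {1..K}"
    proof cases
      case 1
      then have "x \<in> {1..K}" using x1 K_def by auto
      then show ?thesis using x unfolding h_def by (intro image_eqI[of _ _ x]) auto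
    next
      case 2
      then have "even L" "L div 2 = x" by (auto dest: sym)
      then have "x \<notin> lam" using ev L_def by simp
      then show ?thesis using x by simp
    next
      case 3
      define c where "c = L - x"
      have c1: "1 \<le> c" "2*c < L" using 3 xL c_def by auto
      then have "c \<in> {1..K}" using K_def by auto
      moreover have "c \<notin> lam" using pr c1 x L_def c_def xL by auto
      ultimately show ?thesis unfolding h_def using c_def xL by (intro image_eqI[of _ _ c]) auto
    qed
  qed
  have inj: "inj_on h {1..K}"
  proof (rule inj_onI)
    fix a b assume ab: "a \<in> {1..K}" "b \<in> {1..K}" "h a = h b"
    have "2*a < L" "2*b < L" using cK ab by auto
    then show "a = b" using ab unfolding h_def by (auto split: if_splits)
  qed
  have "\<Sum>lam = L + \<Sum>(lam - {L})" using fin Lin by (simp add: sum.remove)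
  also have "\<Sum>(lam - {L}) = sum h {1..K}"
  proof -
    have "sum (\<lambda>x. x) (h ` {1..K}) = sum h {1..K}" using sum.reindex[OF inj, of "\<lambda>x. x"] by simp
    then show ?thesis using img by simp
  qed

  finally have s1: "\<Sum>lam = L + sum h {1..K}" .
  define e where "e = (\<lambda>c. if c \<in> lam then 0 else L - 2*c)"
  have "sum h {1..K} = sum (\<lambda>c. c + e c) {1..K}"
  proof (rule sum.cong)
    fix c assume "c \<in> {1..K}"
    then have "2*c < L" by (rule cK)
    then show "h c = c + e c" unfolding h_def e_def by simp
  qed simp
  also have "\<dots> = \<Sum>{1..K} + sum e {1..K}" by (simp add: sum.distrib)
  finally have s2: "sum h {1..K} = \<Sum>{1..K} + sum e {1..K}" .
  have g: "2 * \<Sum>{1..K} = K * (K + 1)" using double_gauss_sum_from_Suc_0[of K, where ?'a = nat] by simp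
  have t: "2 * tri n = n * (n + 1)" unfolding tri_def by simp
  define E where "E = sum e {1..K}"
  have main: "n * (n + 1) = 2 * L + K * (K + 1) + 2 * E"
    using s1 s2 g t sm E_def by linarith
  have L1: "1 \<le> L" using Lin z0 by (cases L) auto
  show False
  proof (cases "even L")
    case True
    then have LK: "L = 2*K + 2" using K_def L1 by presburger
    have "even E" unfolding E_def e_def using True by (intro dvd_sum) auto
    have Kn: "n - 2 \<le> K" using big LK L_def by simp
    show False
    proof (cases "n - 2 = K")
      case True
      then have "n = K + 2" using n2 by simp
      then have "n * (n+1) = K*K + 5*K + 6" by (simp add: algebra_simps)
      moreover have "2 * L + K * (K + 1) + 2 * E = K*K + 5*K + 4 + 2*E" using LK by (simp add: algebra_simps)
      ultimately have "E = 1" using main by simp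
      then show False using \<open>even E\<close> by simp
    next
      case False
      then have "n \<le> K + 1" using Kn by simp
      then have "n * (n+1) \<le> (K+1) * (K+2)" by (intro mult_le_mono) auto
      moreover have "(K+1)*(K+2) = K*K + 3*K + 2" by (simp add: algebra_simps)
      moreover have "2 * L + K * (K + 1) = K*K + 5*K + 4" using LK by (simp add: algebra_simps)
      ultimately show False using main by linarith
    qed
  next
    case False
    then have LK: "L = 2*K + 1" using K_def L1 by presburger
    have Kn: "n - 2 \<le> K" using big LK L_def by simp
    show False
    proof (cases "n - 2 = K")
      case True
      then have "n = K + 2" using n2 by simp
      then have "n * (n+1) = K*K + 5*K + 6" by (simp add: algebra_simps)
      moreover have "2 * L + K * (K + 1) + 2 * E = K*K + 5*K + 2 + 2*E" using LK by (simp add: algebra_simps)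
      ultimately have E2: "E = 2" using main by simp
      have eK: "e c = 0" if "c \<in> {1..K}" "c \<noteq> K" for c
      proof (rule ccontr)
        assume "e c \<noteq> 0"
        then have "e c = L - 2*c" "c \<notin> lam" unfolding e_def by (auto split: if_splits)
        moreover have "e c \<le> E" unfolding E_def using that by (intro member_le_sum) auto
        ultimately show False using E2 LK that by auto
      qed
      have "E = sum (\<lambda>c. if c = K then e K else 0) {1..K}"
        unfolding E_def using eK by (intro sum.cong) auto
      also have "\<dots> \<le> e K" by (simp add: sum.delta)
      also have "e K \<le> 1" unfolding e_def using LK by simp
      finally show False using E2 by simp
    next
      case False
      then have "n \<le> K + 1" using Kn by simp
      then have "n * (n+1) \<le> (K+1) * (K+2)" by (intro mult_le_mono) auto
      moreover have "(K+1)*(K+2) = K*K + 3*K + 2" by (simp add: algebra_simps)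
      moreover have "2 * L + K * (K + 1) = K*K + 5*K + 2" using LK by (simp add: algebra_simps)
      ultimately show False using main n2 False Kn by linarith
    qed
  qed
qed



lemma unref_finite: "finite (unref N)"
proof -
  have "unref N \<subseteq> Pow {1..N}"
  proof
    fix lam assume "lam \<in> unref N"
    then have dp: "finite lam" "0 \<notin> lam" "\<Sum>lam = N"
      unfolding unref_def distinct_partition_def by auto
    have "x \<in> {1..N}" if "x \<in> lam" for x
    proof -
      have "x \<le> \<Sum>lam" using member_le_sum[of x lam "\<lambda>x. x"] dp(1) that by simp
      moreover have "x \<noteq> 0" using dp(2) that by (metis)
      ultimately show ?thesis using dp(3) by simp
    qed
    then show "lam \<in> Pow {1..N}" by auto
  qed
  then show ?thesis by (rule finite_subset) simp
qed

lemma witness: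
  fixes m :: nat
  assumes m5: "5 \<le> m"
  shows "{1..<m} \<union> {m+3, 2*m} \<in> unref (tri (m+2)) \<and> Max ({1..<m} \<union> {m+3, 2*m}) = 2*m"
proof -
  define W where "W = {1..<m} \<union> {m+3, 2*m}"
  have fin: "finite W" unfolding W_def by simp
  have z: "0 \<notin> W" unfolding W_def using m5 by auto
  have ne: "m + 3 \<noteq> 2*m" using m5 by simp
  have "card {m+3, 2*m} = 2" using ne by simp
  moreover have "card {m+3, 2*m} \<le> card W" unfolding W_def by (intro card_mono) auto
  ultimately have c2: "2 \<le> card W" by simp
  obtain p where p: "m = Suc p" using m5 by (cases m) auto
  have "{1..<m} = {1..p}" using p by auto
  then have g: "2 * \<Sum>{1..<m} = p * (p + 1)"
    using double_gauss_sum_from_Suc_0[of p, where ?'a = nat] by simp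
  have d: "{1..<m} \<inter> {m+3, 2*m} = {}" using m5 by auto
  have "\<Sum>W = \<Sum>{1..<m} + \<Sum>{m+3, 2*m}" unfolding W_def using d by (intro sum.union_disjoint) auto
  also have "\<Sum>{m+3, 2*m} = m + 3 + 2*m" using ne by simp
  finally have sW: "\<Sum>W = \<Sum>{1..<m} + (m + 3 + 2*m)" .
  have "2 * \<Sum>W = (m+2)*(m+2+1)" using sW g p by (simp add: algebra_simps)
  then have sumW: "\<Sum>W = tri (m+2)" unfolding tri_def by simp
  have maxW: "Max W = 2*m"
    unfolding W_def using m5 by (intro Max_eqI) auto
  have nr: "\<not> refinable W"
  proof
    assume "refinable W"
    then obtain a b where ab: "a \<in> missing W" "b \<in> missing W" "a \<noteq> b" "a + b \<in> W"
      unfolding refinable_def by blast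
    have mis: "missing W = {1..2*m} - W" unfolding missing_def maxW ..
    have "m \<le> a" "m \<le> b" using ab(1,2) mis unfolding W_def by (auto simp: not_less)
    then have "2*m < a + b" using ab(3) by simp
    moreover have "a + b \<le> 2*m" using ab(4) maxW fin by (metis Max_ge)
    ultimately show False by simp
  qed
  have "W \<in> unref (tri (m+2))"
    unfolding unref_def distinct_partition_def using fin z c2 sumW nr by simp
  then show ?thesis using maxW W_def by simp
qed



theorem lemma3p8:
  fixes k n z :: nat and lam :: "nat set"
  assumes "k \<ge> 4"
    and "n = 2 * k - 1"
    and "lam \<in> unref_bar (tri n)"
    and "n - 2 \<in> S_of lam"
    and "z = card {s \<in> S_of lam. s < n - 2}"
  shows "\<forall>i. 1 \<le> i \<and> i \<le> z \<longrightarrow>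
           (i, i) \<in> KN (S_of lam) \<and> (i, z + 1) \<in> KN (S_of lam) \<and>
           hook (KN (S_of lam)) i i = 2 * hook (KN (S_of lam)) i (z + 1)"
proof -
  define m where "m = n - 2"
  have m5: "5 \<le> m" and nm: "n = m + 2" using assms(1,2) m_def by auto
  have inU: "lam \<in> unref (tri n)" and mx: "Max lam = Max (Max ` unref (tri n))"
    and cmis: "card (missing lam) = Max lam div 2"
    using assms(3) unfolding unref_bar_def unref_max_def by auto
  have fin: "finite lam" and z0: "0 \<notin> lam" and c2: "2 \<le> card lam" and sm: "\<Sum>lam = tri n"
    and nr: "\<not> refinable lam"
    using inU unfolding unref_def distinct_partition_def by auto
  have ne: "lam \<noteq> {}" using c2 by auto
  note ps = pair_struct[OF fin ne z0 nr cmis]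
  have n2: "2 \<le> n" using nm by simp
  have ub: "Max lam \<le> 2*m" using sum_bound[OF fin ne z0 ps(1) ps(2) sm n2] unfolding m_def .
  have w: "{1..<m} \<union> {m+3, 2*m} \<in> unref (tri n)" "Max ({1..<m} \<union> {m+3, 2*m}) = 2*m"
    using witness[OF m5] nm by auto
  have "2*m \<le> Max (Max ` unref (tri n))"
    using w unref_finite by (metis Max_ge finite_imageI imageI)
  then have L: "Max lam = 2*m" using ub mx by simp
  have top: "2*m \<in> lam" using L fin ne by (metis Max_in)
  have le: "\<forall>x\<in>lam. x \<le> 2*m" using L fin by (metis Max_ge)
  have mid: "m \<notin> lam" using ps(2) L by simp
  have pair: "\<forall>c. 1 \<le> c \<longrightarrow> c < m \<longrightarrow> (c \<in> lam \<longleftrightarrow> 2*m - c \<notin> lam)"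
    using ps(1) L by auto
  have sub: "lam \<subseteq> {1..2*m}" using le z0 by (auto simp: Suc_le_eq intro: gr0I)
  have "missing lam = {1..2*m} - lam" unfolding missing_def L ..
  then have "card (missing lam) = 2*m - card lam" using sub fin by (simp add: card_Diff_subset)
  moreover have "card lam \<le> 2*m" using card_mono[OF _ sub] by simp
  ultimately have card: "card lam = m" using cmis L by simp
  have "{s \<in> S_of lam. s < n - 2} = {c. 0 \<le> c \<and> c < m \<and> c \<notin> lam}"
    unfolding S_of_def m_def by auto
  then have zdef: "z = cnt (\<lambda>c. c \<notin> lam) 0 m" using assms(5) unfolding cnt_def by simp
  show ?thesis
    using hook_main[OF fin top le mid z0 pair card zdef] by blast
qed

end
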